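(* Let $X,Y$ be metric spaces, $U\subset X$, $V\subset Y$ open sets, and $F:X\rightrightarrows Y$ a set-valued mapping whose graph is complete in the product metric. Let $r>0$ and suppose there is $\xi>0$ such that for every $x\in U$, $y\in V$, $v\in F(x)$ with $0<d(y,v)<r\,m(x)$ there is $(u,w)\in\operatorname{gr}F$, $(u,w)\ne(x,v)$, with $$d(y,w)\le d(y,v)-r\,d_\xi\big((x,v),(u,w)\big).$$ Then $F$ is Milyutin regular on $U\times V$ and $\operatorname{sur}_m F(U|V)\ge r$. Conversely, if $F$ is Milyutin regular on $U\times V$, then for every $r$ with $0<r<\operatorname{sur}_mF(U|V)$, every $\xi\in(0,r^{-1})$ and every $x\in U$, $v\in F(x)$, $y\in V$ with $0<d(y,v)<r\,m(x)$, there is $(u,w)\in\operatorname{gr}F$, $(u,w)\neq(x,v)$, satisfying the displayed inequality.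
   Context: $m(x)=d(x,X\setminus U)$ (with $d(x,\emptyset)=+\infty$). $d_\xi((x,v),(x',v'))=\max\{d(x,x'),\xi d(v,v')\}$. $B(A,s)=\{y:\exists a\in A,\ d(y,a)\le s\}$, $B(x,t)$ the closed ball. $F$ is Milyutin regular on $U\times V$ if there is $r>0$ with $B(F(x),rt)\cap V\subset F(B(x,t))$ for all $x\in U$, $0\le t<m(x)$; $\operatorname{sur}_mF(U|V)$ is the supremum of such $r$ ($0$ if none). *)

theory Defs
  imports "HOL-Analysis.Analysis" "HOL-Library.Extended_Real"
begin

definition mdist :: "'a::metric_space set \<Rightarrow> 'a \<Rightarrow> ereal" where
  "mdist U x = (if U = UNIV then \<infinity> else ereal (infdist x (- U)))"

definition dxi :: "real \<Rightarrow> ('a::metric_space \<times> 'b::metric_space) \<Rightarrow> ('a \<times> 'b) \<Rightarrow> real" where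
  "dxi \<xi> p q = max (dist (fst p) (fst q)) (\<xi> * dist (snd p) (snd q))"

definition enl :: "'a::metric_space set \<Rightarrow> real \<Rightarrow> 'a set" where
  "enl A s = {y. \<exists>a\<in>A. dist y a \<le> s}"

definition graph :: "('a \<Rightarrow> 'b set) \<Rightarrow> ('a \<times> 'b) set" where
  "graph F = {(x, y). y \<in> F x}"

definition milyutin_rate ::
  "('a::metric_space \<Rightarrow> 'b::metric_space set) \<Rightarrow> 'a set \<Rightarrow> 'b set \<Rightarrow> real \<Rightarrow> bool" where
  "milyutin_rate F U V r \<longleftrightarrow> r > 0 \<and>
     (\<forall>x\<in>U. \<forall>t. 0 \<le> t \<and> ereal t < mdist U x \<longrightarrow>
        enl (F x) (r * t) \<inter> V \<subseteq> \<Union> (F ` cball x t))"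

definition milyutin_regular ::
  "('a::metric_space \<Rightarrow> 'b::metric_space set) \<Rightarrow> 'a set \<Rightarrow> 'b set \<Rightarrow> bool" where
  "milyutin_regular F U V \<longleftrightarrow> (\<exists>r. milyutin_rate F U V r)"

definition sur_m ::
  "('a::metric_space \<Rightarrow> 'b::metric_space set) \<Rightarrow> 'a set \<Rightarrow> 'b set \<Rightarrow> ereal" where
  "sur_m F U V = (if milyutin_regular F U V
                  then Sup {ereal r | r. milyutin_rate F U V r} else 0)"

end

theory Submission
  imports Defs
begin

lemma half_pow_small: "(a::real) > 0 \<Longrightarrow> \<exists>n. (1/2::real)^n < a"
proof -
  assume a: "a > 0"
  have "(\<lambda>n. (1/2::real)^n) \<longlonglongrightarrow> 0" by (rule LIMSEQ_realpow_zero) auto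
  then have "eventually (\<lambda>n. (1/2::real)^n < a) sequentially" using a by (rule order_tendstoD)
  then show ?thesis by (meson eventually_sequentially order_refl)
qed

lemma ekeland:
  fixes S :: "'c::metric_space set" and f :: "'c \<Rightarrow> real" and D :: "'c \<Rightarrow> 'c \<Rightarrow> real"
  assumes cS: "complete S" and p0: "p0 \<in> S" and fpos: "\<And>p. p \<in> S \<Longrightarrow> f p \<ge> 0"
    and fc: "continuous_on UNIV f" and r: "r > 0"
    and D0: "\<And>p. D p p = 0" and Dpos: "\<And>p q. D p q \<ge> 0"
    and Dtri: "\<And>p q m. D p q \<le> D p m + D m q"
    and Dzero: "\<And>p q. D p q = 0 \<Longrightarrow> p = q"
    and C: "C > 0" and dD: "\<And>p q. dist p q \<le> C * D p q"
    and Dc: "\<And>p. continuous_on UNIV (D p)"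
  shows "\<exists>p\<in>S. f p + r * D p0 p \<le> f p0 \<and> (\<forall>q\<in>S. q \<noteq> p \<longrightarrow> f p < f q + r * D p q)"
proof -
  define T where "T p = {q\<in>S. f q + r * D p q \<le> f p}" for p
  have Tself: "p \<in> T p" if "p \<in> S" for p using that D0 by (simp add: T_def)
  have TS: "T p \<subseteq> S" for p by (auto simp: T_def)
  have Ttrans: "q \<in> T p" if "m \<in> T p" "q \<in> T m" for p m q
  proof -
    have "r * D p q \<le> r * D p m + r * D m q" using Dtri[of p q m] r
      by (metis distrib_left mult_le_cancel_left_pos)
    then show ?thesis using that by (auto simp: T_def)
  qed
  have ex: "\<exists>q. q \<in> T p \<and> (\<forall>q'\<in>T p. f q \<le> f q' + (1/2)^n)" if "p \<in> S" for p n
  proof -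
    have ne: "f ` T p \<noteq> {}" using Tself[OF that] by auto
    have bdd: "bdd_below (f ` T p)" using fpos TS by (auto intro!: bdd_belowI[of _ 0])
    have "Inf (f ` T p) < Inf (f ` T p) + (1/2)^n" by simp
    from cInf_lessD[OF ne this] obtain q where q: "q \<in> T p" "f q < Inf (f ` T p) + (1/2)^n" by auto
    have "\<forall>q'\<in>T p. f q \<le> f q' + (1/2)^n"
    proof
      fix q' assume "q' \<in> T p"
      then have "Inf (f ` T p) \<le> f q'" using bdd by (simp add: cInf_lower)
      then show "f q \<le> f q' + (1/2)^n" using q by linarith
    qed
    then show ?thesis using q by blast
  qed
  define g where "g n p = (SOME q. q \<in> T p \<and> (\<forall>q'\<in>T p. f q \<le> f q' + (1/2)^n))" for n p
  have g: "\<And>p n. p \<in> S \<Longrightarrow> g n p \<in> T p \<and> (\<forall>q'\<in>T p. f (g n p) \<le> f q' + (1/2)^n)"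
    unfolding g_def by (rule someI_ex, rule ex)
  define s where "s = rec_nat p0 g"
  have s0: "s 0 = p0" and sS': "s (Suc n) = g n (s n)" for n by (simp_all add: s_def)
  have sS: "s n \<in> S" for n
  proof (induction n)
    case 0 then show ?case using p0 s0 by simp
  next
    case (Suc n) then show ?case using g[OF Suc, of n] TS[of "s n"] sS'[of n] by auto
  qed
  have step1: "s (Suc n) \<in> T (s n)" for n using g[OF sS[of n]] sS' by simp
  have step2: "\<And>q'. q' \<in> T (s n) \<Longrightarrow> f (s (Suc n)) \<le> f q' + (1/2)^n" for n
    using g[OF sS[of n]] sS' by simp
  have mono: "s m \<in> T (s n)" if "n \<le> m" for n m
    using that
  proof (induction m rule: dec_induct)
    case base then show ?case using Tself sS by auto
  next
    case (step m) then show ?case using Ttrans step1 by blast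
  qed
  have Dsmall: "r * D (s (Suc n)) q \<le> (1/2)^n" if "q \<in> T (s (Suc n))" for n q
  proof -
    have "q \<in> T (s n)" using Ttrans[OF step1 that] .
    then have "f (s (Suc n)) \<le> f q + (1/2)^n" by (rule step2)
    moreover have "f q + r * D (s (Suc n)) q \<le> f (s (Suc n))" using that by (simp add: T_def)
    ultimately show ?thesis by linarith
  qed
  have dsmall: "dist (s (Suc N)) (s m) \<le> C * (1/2)^N / r" if "m \<ge> Suc N" for N m
  proof -
    have "r * D (s (Suc N)) (s m) \<le> (1/2)^N" using Dsmall mono[OF that] by blast
    then have "D (s (Suc N)) (s m) \<le> (1/2)^N / r" using r by (simp add: field_simps)
    then have "C * D (s (Suc N)) (s m) \<le> C * ((1/2)^N / r)" using C by (metis less_le mult_left_mono)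
    then show ?thesis using dD[of "s (Suc N)" "s m"] by (simp add: algebra_simps)
  qed
  have "Cauchy s"
  proof (rule metric_CauchyI)
    fix e :: real assume e: "e > 0"
    obtain N where N: "(1/2::real)^N < e * r / (2 * C)" using half_pow_small[of "e * r / (2*C)"] e r C by auto
    have b: "C * (1/2)^N / r < e / 2"
    proof -
      have "C * (1/2)^N < C * (e * r / (2 * C))" using N C by (rule mult_strict_left_mono)
      also have "\<dots> = e * r / 2" using C by simp
      finally show ?thesis using r by (simp add: field_simps)
    qed
    show "\<exists>M. \<forall>m\<ge>M. \<forall>n\<ge>M. dist (s m) (s n) < e"
    proof (intro exI allI impI)
      fix m n assume "m \<ge> Suc N" "n \<ge> Suc N"
      then have "dist (s (Suc N)) (s m) \<le> C * (1/2)^N / r" "dist (s (Suc N)) (s n) \<le> C * (1/2)^N / r"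
        using dsmall by auto
      moreover have "dist (s m) (s n) \<le> dist (s (Suc N)) (s m) + dist (s (Suc N)) (s n)"
        by (rule dist_triangle3)
      ultimately show "dist (s m) (s n) < e" using b by linarith
    qed
  qed
  then obtain l where lS: "l \<in> S" and lim: "s \<longlonglongrightarrow> l" using completeE[OF cS] sS by metis
  have lT: "l \<in> T (s n)" for n
  proof -
    have "(\<lambda>m. f (s m) + r * D (s n) (s m)) \<longlonglongrightarrow> f l + r * D (s n) l"
      using lim fc Dc[of "s n"]
      by (intro tendsto_intros) (auto intro: isCont_tendsto_compose simp: continuous_on_eq_continuous_at)
    moreover have "\<exists>N. \<forall>m\<ge>N. f (s m) + r * D (s n) (s m) \<le> f (s n)"
      using mono by (auto simp: T_def)
    ultimately have "f l + r * D (s n) l \<le> f (s n)" by (rule LIMSEQ_le_const2)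
    then show ?thesis using lS by (simp add: T_def)
  qed
  show ?thesis
  proof (intro bexI conjI ballI impI)
    show "l \<in> S" by (rule lS)
    show "f l + r * D p0 l \<le> f p0" using lT[of 0] s0 by (simp add: T_def)
    fix q assume qS: "q \<in> S" and ql: "q \<noteq> l"
    show "f l < f q + r * D l q"
    proof (rule ccontr)
      assume "\<not> ?thesis"
      then have qT: "q \<in> T l" using qS by (simp add: T_def)
      have "r * D l q \<le> (1/2)^n" for n
      proof -
        have "f l \<le> f (s (Suc n))" using lT[of "Suc n"] Dpos[of "s (Suc n)" l] r
          by (simp add: T_def) (smt (verit) mult_nonneg_nonneg)
        moreover have "f (s (Suc n)) \<le> f q + (1/2)^n" using step2 Ttrans[OF lT[of n] qT] by blast
        moreover have "f q + r * D l q \<le> f l" using qT by (simp add: T_def)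
        ultimately show ?thesis by linarith
      qed
      moreover have "D l q > 0" using Dpos[of l q] Dzero[of l q] ql by force
      ultimately show False using half_pow_small[of "r * D l q"] r
        by (meson mult_pos_pos not_le)
    qed
  qed
qed
lemma dxi_props:
  fixes p q m :: "'a::metric_space \<times> 'b::metric_space"
  assumes xi: "\<xi> > 0"
  shows "dxi \<xi> p p = 0" "dxi \<xi> p q \<ge> 0" "dxi \<xi> p q \<le> dxi \<xi> p m + dxi \<xi> m q"
    "dxi \<xi> p q = 0 \<Longrightarrow> p = q" "dist p q \<le> (1 + 1/\<xi>) * dxi \<xi> p q"
    "continuous_on UNIV (dxi \<xi> p)"
proof -
  show "dxi \<xi> p p = 0" by (simp add: dxi_def)
  show "dxi \<xi> p q \<ge> 0" by (simp add: dxi_def le_max_iff_disj)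
  have t1: "dist (fst p) (fst q) \<le> dist (fst p) (fst m) + dist (fst m) (fst q)" by (rule dist_triangle)
  have t2: "\<xi> * dist (snd p) (snd q) \<le> \<xi> * dist (snd p) (snd m) + \<xi> * dist (snd m) (snd q)"
    using dist_triangle[of "snd p" "snd q" "snd m"] xi by (simp add: distrib_left[symmetric])
  show "dxi \<xi> p q \<le> dxi \<xi> p m + dxi \<xi> m q" using t1 t2 unfolding dxi_def by linarith
  show "dxi \<xi> p q = 0 \<Longrightarrow> p = q"
    using xi by (cases p, cases q) (auto simp: dxi_def max_def split: if_splits)
  obtain a b c d where pq: "p = (a,b)" "q = (c,d)" by (cases p, cases q)
  have "dist p q = sqrt ((dist a c)\<^sup>2 + (dist b d)\<^sup>2)" using pq by (simp add: dist_Pair_Pair)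
  also have "\<dots> \<le> dist a c + dist b d"
    by (rule real_sqrt_le_iff[THEN iffD2, of _ "(dist a c + dist b d)^2", simplified])
       (simp add: power2_eq_square algebra_simps)
  also have "\<dots> \<le> (1 + 1/\<xi>) * dxi \<xi> p q"
  proof -
    have "dist a c \<le> dxi \<xi> p q" using pq by (simp add: dxi_def)
    moreover have "\<xi> * dist b d \<le> dxi \<xi> p q" using pq by (simp add: dxi_def)
    then have "dist b d \<le> dxi \<xi> p q / \<xi>" using xi by (simp add: field_simps)
    ultimately show ?thesis by (simp add: algebra_simps)
  qed
  finally show "dist p q \<le> (1 + 1/\<xi>) * dxi \<xi> p q" .
  show "continuous_on UNIV (dxi \<xi> p)"
    unfolding dxi_def by (intro continuous_intros)
qed

lemma part2:
  fixes F :: "'a::metric_space \<Rightarrow> 'b::metric_space set"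
  assumes reg: "milyutin_regular F U V" and r: "0 < r" "ereal r < sur_m F U V" and xi: "0 < \<xi>" "\<xi> < 1 / r"
    and x: "x \<in> U" and v: "v \<in> F x" and y: "y \<in> V"
    and d: "0 < dist y v" "ereal (dist y v) < ereal r * mdist U x"
  shows "\<exists>u w. w \<in> F u \<and> (u, w) \<noteq> (x, v) \<and> dist y w \<le> dist y v - r * dxi \<xi> (x, v) (u, w)"
proof -
  have "ereal r < Sup {ereal r | r. milyutin_rate F U V r}" using r reg by (simp add: sur_m_def)
  then obtain r' where rate: "milyutin_rate F U V r'" and rr: "r < r'"
    by (auto simp: less_Sup_iff)
  have r'pos: "r' > 0" using rr r by simp
  define t where "t = dist y v / r'"
  have t0: "t \<ge> 0" using r'pos by (simp add: t_def)
  have tr: "r' * t = dist y v" using r'pos by (simp add: t_def)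
  have "r * t \<le> dist y v" using tr rr t0 by (metis mult_right_mono less_le)
  have "t < dist y v / r" unfolding t_def using r d rr by (simp add: frac_less2)
  have tm: "ereal t < mdist U x"
  proof (cases "U = UNIV")
    case True then show ?thesis by (simp add: mdist_def)
  next
    case False
    then have "dist y v < r * infdist x (- U)" using d by (simp add: mdist_def)
    then have "dist y v / r < infdist x (-U)" using r by (simp add: field_simps)
    then show ?thesis using False \<open>t < dist y v / r\<close> by (simp add: mdist_def)
  qed
  have "y \<in> enl (F x) (r' * t) \<inter> V" using tr v y by (auto simp: enl_def)
  moreover have "enl (F x) (r' * t) \<inter> V \<subseteq> \<Union> (F ` cball x t)" using rate x t0 tm by (simp add: milyutin_rate_def)
  ultimately have "y \<in> \<Union> (F ` cball x t)" by blast
  then obtain u where u: "dist x u \<le> t" "y \<in> F u" by auto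
  have "r * dist x u \<le> dist y v" using u \<open>r * t \<le> dist y v\<close> r
    by (meson mult_left_mono less_le order_trans)
  moreover have "r * (\<xi> * dist v y) \<le> dist y v"
  proof -
    have "r * \<xi> < 1" using xi r by (simp add: field_simps)
    then have "(r * \<xi>) * dist v y \<le> 1 * dist v y" by (intro mult_right_mono) auto
    then show ?thesis by (simp add: dist_commute mult.assoc)
  qed
  ultimately have "r * dxi \<xi> (x, v) (u, y) \<le> dist y v" by (simp add: dxi_def max_mult_distrib_left[symmetric]) 
  then show ?thesis using u d by (intro exI[of _ u] exI[of _ y]) auto
qed

lemma part1:
  fixes F :: "'a::metric_space \<Rightarrow> 'b::metric_space set"
  assumes cg: "complete (graph F)" and r: "r > 0" and xi: "\<xi> > 0"
    and H: "\<forall>x\<in>U. \<forall>y\<in>V. \<forall>v\<in>F x.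
               0 < dist y v \<and> ereal (dist y v) < ereal r * mdist U x \<longrightarrow>
               (\<exists>u w. w \<in> F u \<and> (u, w) \<noteq> (x, v) \<and>
                  dist y w \<le> dist y v - r * dxi \<xi> (x, v) (u, w))"
  shows "milyutin_rate F U V r"
  unfolding milyutin_rate_def
proof (intro conjI r ballI allI impI subsetI)
  fix x t y assume x: "x \<in> U" and t: "0 \<le> t \<and> ereal t < mdist U x"
    and y: "y \<in> enl (F x) (r * t) \<inter> V"
  then obtain v where v: "v \<in> F x" "dist y v \<le> r * t" and yV: "y \<in> V" by (auto simp: enl_def)
  show "y \<in> \<Union> (F ` cball x t)"
  proof (cases "dist y v = 0")
    case True then show ?thesis using v t by auto
  next
    case False
    then have dpos: "dist y v > 0" by simp
    have "\<exists>p\<in>graph F. dist y (snd p) + r * dxi \<xi> (x, v) p \<le> dist y (snd (x, v)) \<and>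
        (\<forall>q\<in>graph F. q \<noteq> p \<longrightarrow> dist y (snd p) < dist y (snd q) + r * dxi \<xi> p q)"
      by (rule ekeland[where C = "1 + 1/\<xi>", OF cg _ _ _ r dxi_props(1)[OF xi] dxi_props(2)[OF xi]
          dxi_props(3)[OF xi] dxi_props(4)[OF xi] _ dxi_props(5)[OF xi] dxi_props(6)[OF xi]])
         (use v xi in \<open>auto simp: graph_def intro!: continuous_intros add_pos_pos\<close>)
    then obtain u w where uw: "w \<in> F u" "dist y w + r * dxi \<xi> (x, v) (u, w) \<le> dist y v"
      and opt: "\<And>u' w'. w' \<in> F u' \<Longrightarrow> (u', w') \<noteq> (u, w) \<Longrightarrow> dist y w < dist y w' + r * dxi \<xi> (u, w) (u', w')"
      by (auto simp: graph_def)
    have dxu: "dist x u \<le> dxi \<xi> (x, v) (u, w)" by (simp add: dxi_def)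
    have rdxu: "r * dist x u \<le> dist y v - dist y w" using uw dxu r
      by (smt (verit) mult_left_mono)
    have inrange: "u \<in> U \<and> ereal (dist y w) < ereal r * mdist U u"
    proof (cases "U = UNIV")
      case True then show ?thesis using r by (simp add: mdist_def)
    next
      case False
      then have "t < infdist x (- U)" using t by (simp add: mdist_def)
      then have "r * t < r * infdist x (-U)" using r by simp
      moreover have "infdist x (-U) \<le> infdist u (-U) + dist x u" by (rule infdist_triangle)
      then have "r * infdist x (-U) \<le> r * infdist u (-U) + r * dist x u" using r
        by (metis distrib_left mult_left_mono less_le)
      ultimately have lt: "dist y w < r * infdist u (-U)" using rdxu v by linarith
      have "u \<in> U"
      proof (rule ccontr)
        assume "u \<notin> U" then have "infdist u (-U) = 0" by simp
        then show False using lt by simp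
      qed
      then show ?thesis using lt False by (simp add: mdist_def)
    qed
    have "dist y w = 0"
    proof (rule ccontr)
      assume "dist y w \<noteq> 0"
      then have "0 < dist y w" by simp
      then obtain u' w' where "w' \<in> F u'" "(u', w') \<noteq> (u, w)"
        "dist y w' \<le> dist y w - r * dxi \<xi> (u, w) (u', w')"
        using H inrange yV uw(1) by blast
      then show False using opt by fastforce
    qed
    then have "y = w" by simp
    moreover have "dist x u \<le> t"
    proof -
      have "r * dist x u \<le> r * t" using rdxu v uw by (smt (verit) zero_le_dist)
      then show ?thesis using r by simp
    qed
    ultimately show ?thesis using uw by auto
  qed
qed


theorem mainTheorem2:
  fixes F :: "'a::metric_space \<Rightarrow> 'b::metric_space set"
    and U :: "'a set" and V :: "'b set"
  assumes "open U" and "open V" and "complete (graph F)"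
  shows "(\<forall>r \<xi>. r > 0 \<and> \<xi> > 0 \<and>
            (\<forall>x\<in>U. \<forall>y\<in>V. \<forall>v\<in>F x.
               0 < dist y v \<and> ereal (dist y v) < ereal r * mdist U x \<longrightarrow>
               (\<exists>u w. w \<in> F u \<and> (u, w) \<noteq> (x, v) \<and>
                  dist y w \<le> dist y v - r * dxi \<xi> (x, v) (u, w)))
          \<longrightarrow> milyutin_regular F U V \<and> sur_m F U V \<ge> ereal r)
       \<and>
       (milyutin_regular F U V \<longrightarrow>
          (\<forall>r \<xi>. 0 < r \<and> ereal r < sur_m F U V \<and> 0 < \<xi> \<and> \<xi> < 1 / r \<longrightarrow>
            (\<forall>x\<in>U. \<forall>v\<in>F x. \<forall>y\<in>V.
               0 < dist y v \<and> ereal (dist y v) < ereal r * mdist U x \<longrightarrow>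
               (\<exists>u w. w \<in> F u \<and> (u, w) \<noteq> (x, v) \<and>
                  dist y w \<le> dist y v - r * dxi \<xi> (x, v) (u, w)))))"
proof (intro conjI impI allI)
  fix r \<xi> :: real
  assume h: "0 < r \<and> 0 < \<xi> \<and> (\<forall>x\<in>U. \<forall>y\<in>V. \<forall>v\<in>F x.
               0 < dist y v \<and> ereal (dist y v) < ereal r * mdist U x \<longrightarrow>
               (\<exists>u w. w \<in> F u \<and> (u, w) \<noteq> (x, v) \<and>
                  dist y w \<le> dist y v - r * dxi \<xi> (x, v) (u, w)))"
  then have rate: "milyutin_rate F U V r" using part1[OF assms(3)] by blast
  then show reg: "milyutin_regular F U V" by (auto simp: milyutin_regular_def)
  show "ereal r \<le> sur_m F U V" using reg rate by (auto simp: sur_m_def intro!: Sup_upper)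
next
  fix r \<xi> :: real
  assume "milyutin_regular F U V" "0 < r \<and> ereal r < sur_m F U V \<and> 0 < \<xi> \<and> \<xi> < 1 / r"
  then show "\<forall>x\<in>U. \<forall>v\<in>F x. \<forall>y\<in>V.
               0 < dist y v \<and> ereal (dist y v) < ereal r * mdist U x \<longrightarrow>
               (\<exists>u w. w \<in> F u \<and> (u, w) \<noteq> (x, v) \<and>
                  dist y w \<le> dist y v - r * dxi \<xi> (x, v) (u, w))"
    using part2 by blast
qed

end
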